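(* Let $G$ be a finitely generated group, equipped with a word metric with respect to a finite symmetric generating set, acting by isometries on a metric space $X$ with $\operatorname{asdim}_{AN}(X)<\infty$. Fix $x_0\in X$ and for $R>0$ let $W_R(x_0)=\{\gamma\in G: d(\gamma\cdot x_0,x_0)\le R\}$ (with the metric restricted from $G$). If there are constants $m,b,c>0$ such that for every $R>0$ the function $r\mapsto m r+bR+c$ is a $k$-dimensional control function of $W_R(x_0)$, then $$\operatorname{asdim}_{AN}(G)\le k+\operatorname{asdim}_{AN}(X).$$
   Context: A $k$-dimensional control function of a metric space $Z$ is a function $D\colon\mathbb R_+\to\mathbb R_+$ such that for every $r>0$ there are families $\mathcal U_1,\dots,\mathcal U_{k+1}$ of subsets of $Z$ covering $Z$, each $r$-disjoint (points in different members of the same family at distance $\ge r$), with members of diameter $\le D(r)$. $\operatorname{asdim}_{AN}(Z)\le n$ iff $Z$ has an $n$-dimensional control function of the form $r\mapsto cr+b$ with $b,c\ge0$; $\operatorname{asdim}_{AN}(Z)$ is the least such $n$. *)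

theory Defs
  imports "HOL-Analysis.Analysis" "HOL-Algebra.Group" "HOL-Algebra.Generated_Groups"
    "HOL-Library.Extended_Nat"
begin

definition r_disjoint :: "('a \<Rightarrow> 'a \<Rightarrow> real) \<Rightarrow> real \<Rightarrow> 'a set set \<Rightarrow> bool" where
  "r_disjoint d r U \<longleftrightarrow>
     (\<forall>A\<in>U. \<forall>B\<in>U. A \<noteq> B \<longrightarrow> (\<forall>x\<in>A. \<forall>y\<in>B. r \<le> d x y))"

definition control_function ::
  "'a set \<Rightarrow> ('a \<Rightarrow> 'a \<Rightarrow> real) \<Rightarrow> nat \<Rightarrow> (real \<Rightarrow> real) \<Rightarrow> bool" where
  "control_function Z d k D \<longleftrightarrow>
     (\<forall>r>0. D r \<ge> 0) \<and>
     (\<forall>r>0. \<exists>U :: nat \<Rightarrow> 'a set set.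
        (\<forall>i\<le>k. (\<forall>A\<in>U i. A \<subseteq> Z) \<and> r_disjoint d r (U i)
               \<and> (\<forall>A\<in>U i. \<forall>x\<in>A. \<forall>y\<in>A. d x y \<le> D r))
        \<and> Z \<subseteq> (\<Union>i\<le>k. \<Union>(U i)))"

definition asdim_AN_le :: "'a set \<Rightarrow> ('a \<Rightarrow> 'a \<Rightarrow> real) \<Rightarrow> nat \<Rightarrow> bool" where
  "asdim_AN_le Z d n \<longleftrightarrow>
     (\<exists>c b. c \<ge> 0 \<and> b \<ge> 0 \<and> control_function Z d n (\<lambda>r. c * r + b))"

text \<open>Assouad-Nagata dimension as an extended natural (\<infinity> if no n works).\<close>
definition asdim_AN :: "'a set \<Rightarrow> ('a \<Rightarrow> 'a \<Rightarrow> real) \<Rightarrow> enat" where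
  "asdim_AN Z d = Inf {enat n | n. asdim_AN_le Z d n}"

definition word_length :: "('g, 'b) monoid_scheme \<Rightarrow> 'g set \<Rightarrow> 'g \<Rightarrow> nat" where
  "word_length G S g = (LEAST n. \<exists>ws. length ws = n \<and> set ws \<subseteq> S \<and>
                                   foldr (\<otimes>\<^bsub>G\<^esub>) ws \<one>\<^bsub>G\<^esub> = g)"

definition word_dist :: "('g, 'b) monoid_scheme \<Rightarrow> 'g set \<Rightarrow> 'g \<Rightarrow> 'g \<Rightarrow> real" where
  "word_dist G S g h = real (word_length G S (inv\<^bsub>G\<^esub> g \<otimes>\<^bsub>G\<^esub> h))"

end

theory Submission
  imports Defs
begin


definition good_cover :: "('a \<Rightarrow> 'a \<Rightarrow> real) \<Rightarrow> 'a set \<Rightarrow> real \<Rightarrow> real \<Rightarrow> nat \<Rightarrow> (nat \<Rightarrow> 'a set set) \<Rightarrow> bool" where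
  "good_cover d Z r M k U \<longleftrightarrow>
     (\<forall>i\<le>k. (\<forall>A\<in>U i. A \<subseteq> Z) \<and> r_disjoint d r (U i)
               \<and> (\<forall>A\<in>U i. \<forall>x\<in>A. \<forall>y\<in>A. d x y \<le> M))
        \<and> Z \<subseteq> (\<Union>i\<le>k. \<Union>(U i))"

lemma control_function_iff:
  "control_function Z d k D \<longleftrightarrow> (\<forall>r>0. D r \<ge> 0) \<and> (\<forall>r>0. \<exists>U. good_cover d Z r (D r) k U)"
  by (simp add: control_function_def good_cover_def)

lemma good_cover_pad:
  assumes "good_cover d Z r M k U" "k \<le> k'"
  shows "good_cover d Z r M k' (\<lambda>j. if j \<le> k then U j else {})"
  unfolding good_cover_def
proof (rule conjI)
  show "\<forall>i\<le>k'. (\<forall>A\<in>(if i \<le> k then U i else {}). A \<subseteq> Z) \<and> r_disjoint d r (if i \<le> k then U i else {})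
        \<and> (\<forall>A\<in>(if i \<le> k then U i else {}). \<forall>x\<in>A. \<forall>y\<in>A. d x y \<le> M)"
  proof (intro allI impI)
    fix i assume i: "i \<le> k'"
    show "(\<forall>A\<in>(if i \<le> k then U i else {}). A \<subseteq> Z) \<and> r_disjoint d r (if i \<le> k then U i else {})
        \<and> (\<forall>A\<in>(if i \<le> k then U i else {}). \<forall>x\<in>A. \<forall>y\<in>A. d x y \<le> M)"
    proof (cases "i \<le> k")
      case True then show ?thesis using assms(1) unfolding good_cover_def by simp
    next
      case False then show ?thesis unfolding r_disjoint_def by simp
    qed
  qed
next
  have "Z \<subseteq> (\<Union>i\<le>k. \<Union>(U i))" using assms(1) unfolding good_cover_def by blast
  also have "\<dots> \<subseteq> (\<Union>i\<le>k'. \<Union>(if i \<le> k then U i else {}))"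
    using assms(2) by force
  finally show "Z \<subseteq> (\<Union>i\<le>k'. \<Union>(if i \<le> k then U i else {}))" .
qed

lemma good_cover_mono:
  assumes "good_cover d Z r M k U" "M \<le> M'"
  shows "good_cover d Z r M' k U"
  using assms unfolding good_cover_def by fastforce

lemma good_cover_empty: "good_cover d {} r M k (\<lambda>_. {})"
  unfolding good_cover_def r_disjoint_def by auto

lemma good_coverD:
  assumes "good_cover d Z r M k U" "i \<le> k"
  shows "\<And>A. A \<in> U i \<Longrightarrow> A \<subseteq> Z" "r_disjoint d r (U i)"
    "\<And>A x y. A \<in> U i \<Longrightarrow> x \<in> A \<Longrightarrow> y \<in> A \<Longrightarrow> d x y \<le> M"
proof -
  have h: "(\<forall>A\<in>U i. A \<subseteq> Z) \<and> r_disjoint d r (U i) \<and> (\<forall>A\<in>U i. \<forall>x\<in>A. \<forall>y\<in>A. d x y \<le> M)"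
    using assms unfolding good_cover_def by simp
  show "\<And>A. A \<in> U i \<Longrightarrow> A \<subseteq> Z" using h by simp
  show "r_disjoint d r (U i)" using h by simp
  show "\<And>A x y. A \<in> U i \<Longrightarrow> x \<in> A \<Longrightarrow> y \<in> A \<Longrightarrow> d x y \<le> M" using h by simp
qed

lemma good_cover_cov:
  assumes "good_cover d Z r M k U" "x \<in> Z"
  shows "\<exists>i\<le>k. \<exists>A\<in>U i. x \<in> A"
proof -
  have "x \<in> (\<Union>i\<le>k. \<Union>(U i))" using assms unfolding good_cover_def by blast
  then show ?thesis by blast
qed

lemma good_coverI:
  assumes "\<And>i A. i \<le> k \<Longrightarrow> A \<in> U i \<Longrightarrow> A \<subseteq> Z"
    "\<And>i. i \<le> k \<Longrightarrow> r_disjoint d r (U i)"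
    "\<And>i A x y. i \<le> k \<Longrightarrow> A \<in> U i \<Longrightarrow> x \<in> A \<Longrightarrow> y \<in> A \<Longrightarrow> d x y \<le> M"
    "\<And>x. x \<in> Z \<Longrightarrow> \<exists>i\<le>k. \<exists>A\<in>U i. x \<in> A"
  shows "good_cover d Z r M k U"
  unfolding good_cover_def
proof (rule conjI)
  show "\<forall>i\<le>k. (\<forall>A\<in>U i. A \<subseteq> Z) \<and> r_disjoint d r (U i) \<and> (\<forall>A\<in>U i. \<forall>x\<in>A. \<forall>y\<in>A. d x y \<le> M)"
    using assms(1-3) by simp
  show "Z \<subseteq> (\<Union>i\<le>k. \<Union>(U i))"
  proof
    fix x assume "x \<in> Z"
    then obtain i A where "i \<le> k" "A \<in> U i" "x \<in> A" using assms(4) by blast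
    then show "x \<in> (\<Union>i\<le>k. \<Union>(U i))" by blast
  qed
qed

lemma r_disjointD:
  assumes "r_disjoint d r U" "A \<in> U" "B \<in> U" "A \<noteq> B" "x \<in> A" "y \<in> B"
  shows "r \<le> d x y"
  using assms unfolding r_disjoint_def by blast

lemma r_disjointI:
  assumes "\<And>A B x y. A \<in> U \<Longrightarrow> B \<in> U \<Longrightarrow> A \<noteq> B \<Longrightarrow> x \<in> A \<Longrightarrow> y \<in> B \<Longrightarrow> r \<le> d x y"
  shows "r_disjoint d r U"
  using assms unfolding r_disjoint_def by blast

lemma good_cover_union:
  assumes Qdisj: "r_disjoint d r \<Q>"
    and F: "\<And>Q. Q\<in>\<Q> \<Longrightarrow> good_cover d Q r M k (F Q)"
  shows "good_cover d (\<Union>\<Q>) r M k (\<lambda>j. \<Union>Q\<in>\<Q>. F Q j)"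
proof (rule good_coverI)
  fix i A assume i: "i \<le> k" and A: "A \<in> (\<Union>Q\<in>\<Q>. F Q i)"
  then obtain Q where "Q \<in> \<Q>" "A \<in> F Q i" by blast
  then show "A \<subseteq> \<Union>\<Q>" using good_coverD(1)[OF F i] by blast
next
  fix i A x y assume i: "i \<le> k" and A: "A \<in> (\<Union>Q\<in>\<Q>. F Q i)" "x \<in> A" "y \<in> A"
  then obtain Q where "Q \<in> \<Q>" "A \<in> F Q i" by blast
  then show "d x y \<le> M" using good_coverD(3)[OF F i] A by blast
next
  fix x assume "x \<in> \<Union>\<Q>"
  then obtain Q where Q: "Q \<in> \<Q>" "x \<in> Q" by blast
  then obtain i A where "i \<le> k" "A \<in> F Q i" "x \<in> A" using good_cover_cov[OF F] by blast
  then show "\<exists>i\<le>k. \<exists>A\<in>(\<Union>Q\<in>\<Q>. F Q i). x \<in> A" using Q by blast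
next
  fix i assume i: "i \<le> k"
  show "r_disjoint d r (\<Union>Q\<in>\<Q>. F Q i)"
  proof (rule r_disjointI)
    fix A B x y assume A: "A \<in> (\<Union>Q\<in>\<Q>. F Q i)" and B: "B \<in> (\<Union>Q\<in>\<Q>. F Q i)"
      and AB: "A \<noteq> B" and x: "x \<in> A" and y: "y \<in> B"
    from A obtain Q1 where Q1: "Q1 \<in> \<Q>" "A \<in> F Q1 i" by blast
    from B obtain Q2 where Q2: "Q2 \<in> \<Q>" "B \<in> F Q2 i" by blast
    have sub1: "A \<subseteq> Q1" using good_coverD(1)[OF F[OF Q1(1)] i] Q1(2) .
    have sub2: "B \<subseteq> Q2" using good_coverD(1)[OF F[OF Q2(1)] i] Q2(2) .
    show "r \<le> d x y"
    proof (cases "Q1 = Q2")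
      case True
      show ?thesis using r_disjointD[OF good_coverD(2)[OF F[OF Q1(1)] i] Q1(2)] Q2(2) True AB x y by blast
    next
      case False
      show ?thesis using r_disjointD[OF Qdisj Q1(1) Q2(1) False] sub1 sub2 x y by blast
    qed
  qed
qed

lemma sat_family:
  fixes d :: "'a \<Rightarrow> 'a \<Rightarrow> real"
  assumes symd: "\<And>x y. x \<in> C \<Longrightarrow> y \<in> C \<Longrightarrow> d x y = d y x"
    and trid: "\<And>x y z. x \<in> C \<Longrightarrow> y \<in> C \<Longrightarrow> z \<in> C \<Longrightarrow> d x z \<le> d x y + d y z"
    and QC: "Q \<subseteq> C" and AC: "\<And>a. a \<in> \<A> \<Longrightarrow> a \<subseteq> C"
    and EQ: "\<And>e. e \<in> \<E> \<Longrightarrow> e \<subseteq> Q" and Edisj: "r_disjoint d T \<E>"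
    and Emesh: "\<And>e x y. e \<in> \<E> \<Longrightarrow> x \<in> e \<Longrightarrow> y \<in> e \<Longrightarrow> d x y \<le> \<phi>"
    and Adisj: "r_disjoint d r \<A>"
    and Amesh: "\<And>a x y. a \<in> \<A> \<Longrightarrow> x \<in> a \<Longrightarrow> y \<in> a \<Longrightarrow> d x y \<le> MA"
    and T: "2*r + MA \<le> T" and phi0: "0 \<le> \<phi>" and MA0: "0 \<le> MA" and r0: "0 < r"
  shows "\<exists>\<B>. (\<forall>b\<in>\<B>. b \<subseteq> Q) \<and> r_disjoint d r \<B>
      \<and> (\<forall>b\<in>\<B>. \<forall>x\<in>b. \<forall>y\<in>b. d x y \<le> \<phi> + 2*MA + 2*r)
      \<and> \<Union>\<E> \<subseteq> \<Union>\<B> \<and> (\<forall>a\<in>\<A>. a \<inter> Q \<subseteq> \<Union>\<B>)"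
proof -
  define att where "att a e \<longleftrightarrow> (\<exists>x\<in>a\<inter>Q. \<exists>y\<in>e. d x y < r)" for a e
  define N where "N e = e \<union> \<Union>{a\<inter>Q | a. a \<in> \<A> \<and> att a e}" for e
  define LO where "LO = {a\<inter>Q | a. a \<in> \<A> \<and> (\<forall>e\<in>\<E>. \<not> att a e)}"
  define \<B> where "\<B> = N ` \<E> \<union> LO"
  have F1: "e1 = e2" if "e1 \<in> \<E>" "e2 \<in> \<E>" "x \<in> e1" "y \<in> e2" "d x y < T" for e1 e2 x y
    using r_disjointD[OF Edisj that(1,2) _ that(3,4)] that(5) by fastforce
  have F2: "e1 = e2" if a: "a \<in> \<A>" and e: "e1 \<in> \<E>" "e2 \<in> \<E>" and at: "att a e1" "att a e2" for a e1 e2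
  proof -
    obtain x1 y1 where 1: "x1 \<in> a" "x1 \<in> Q" "y1 \<in> e1" "d x1 y1 < r" using at(1) unfolding att_def by blast
    obtain x2 y2 where 2: "x2 \<in> a" "x2 \<in> Q" "y2 \<in> e2" "d x2 y2 < r" using at(2) unfolding att_def by blast
    have C: "x1 \<in> C" "x2 \<in> C" "y1 \<in> C" "y2 \<in> C" using 1 2 AC[OF a] EQ e QC by blast+
    have "d y1 y2 \<le> d y1 x1 + d x1 y2" using trid C by blast
    also have "d x1 y2 \<le> d x1 x2 + d x2 y2" using trid C by blast
    finally have "d y1 y2 \<le> d y1 x1 + d x1 x2 + d x2 y2" by simp
    moreover have "d y1 x1 = d x1 y1" using symd C by blast
    moreover have "d x1 x2 \<le> MA" using Amesh a 1 2 by blast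
    ultimately have "d y1 y2 < T" using 1 2 T by linarith
    then show ?thesis using F1 e 1 2 by blast
  qed
  have F3: "a1 = a2" if "a1 \<in> \<A>" "a2 \<in> \<A>" "x \<in> a1" "y \<in> a2" "d x y < r" for a1 a2 x y
    using r_disjointD[OF Adisj that(1,2) _ that(3,4)] that(5) by fastforce
  have rT: "r \<le> T" using T MA0 r0 by linarith
  define can where "can a = (if \<exists>e\<in>\<E>. att a e then N (SOME e. e \<in> \<E> \<and> att a e) else a \<inter> Q)" for a
  have can_att: "can a = N e" if "a \<in> \<A>" "e \<in> \<E>" "att a e" for a e
  proof -
    have ex: "\<exists>e. e \<in> \<E> \<and> att a e" using that by blast
    have "(SOME e. e \<in> \<E> \<and> att a e) = e"
      using someI_ex[OF ex] F2 that by blast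
    then show ?thesis unfolding can_def using that by auto
  qed
  have types: "(\<exists>e\<in>\<E>. z \<in> e \<and> B = N e) \<or> (\<exists>a\<in>\<A>. z \<in> a \<and> z \<in> Q \<and> B = can a)"
    if "B \<in> \<B>" "z \<in> B" for B z
  proof -
    { assume "B \<in> N ` \<E>"
      then obtain e where e: "e \<in> \<E>" "B = N e" by blast
      then have "z \<in> e \<or> (\<exists>a. a \<in> \<A> \<and> att a e \<and> z \<in> a \<inter> Q)" using that(2) unfolding N_def by blast
      then have ?thesis using e can_att by blast }
    moreover
    { assume "B \<in> LO"
      then obtain a where a: "a \<in> \<A>" "\<forall>e\<in>\<E>. \<not> att a e" "B = a \<inter> Q" unfolding LO_def by blast
      then have "can a = a \<inter> Q" unfolding can_def by auto
      then have ?thesis using a that(2) by blast }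
    ultimately show ?thesis using that(1) unfolding \<B>_def by blast
  qed
  have sub: "B \<subseteq> Q" if "B \<in> \<B>" for B
    using that EQ unfolding \<B>_def N_def LO_def by blast
  have disj: "r \<le> d x y" if B: "B1 \<in> \<B>" "B2 \<in> \<B>" "B1 \<noteq> B2" "x \<in> B1" "y \<in> B2" for B1 B2 x y
  proof (rule ccontr)
    assume "\<not> r \<le> d x y"
    then have lt: "d x y < r" by simp
    have xC: "x \<in> C" and yC: "y \<in> C" using sub B QC by blast+
    have "B1 = B2"
    proof (cases "\<exists>e\<in>\<E>. x \<in> e \<and> B1 = N e")
      case True
      then obtain e1 where e1: "e1 \<in> \<E>" "x \<in> e1" "B1 = N e1" by blast
      show ?thesis
      proof (cases "\<exists>e\<in>\<E>. y \<in> e \<and> B2 = N e")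
        case True
        then obtain e2 where e2: "e2 \<in> \<E>" "y \<in> e2" "B2 = N e2" by blast
        have "e1 = e2" using F1[OF e1(1) e2(1) e1(2) e2(2)] lt rT by linarith
        then show ?thesis using e1 e2 by simp
      next
        case False
        then obtain a2 where a2: "a2 \<in> \<A>" "y \<in> a2" "y \<in> Q" "B2 = can a2" using types[OF B(2,5)] by blast
        have "d y x < r" using lt symd xC yC by simp
        then have "att a2 e1" unfolding att_def using a2 e1 by blast
        then show ?thesis using can_att a2 e1 by simp
      qed
    next
      case False
      then obtain a1 where a1: "a1 \<in> \<A>" "x \<in> a1" "x \<in> Q" "B1 = can a1" using types[OF B(1,4)] by blast
      show ?thesis
      proof (cases "\<exists>e\<in>\<E>. y \<in> e \<and> B2 = N e")
        case True
        then obtain e2 where e2: "e2 \<in> \<E>" "y \<in> e2" "B2 = N e2" by blast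
        have "att a1 e2" unfolding att_def using a1 e2 lt by blast
        then show ?thesis using can_att a1 e2 by simp
      next
        case False
        then obtain a2 where a2: "a2 \<in> \<A>" "y \<in> a2" "y \<in> Q" "B2 = can a2" using types[OF B(2,5)] by blast
        have "a1 = a2" using F3[OF a1(1) a2(1) a1(2) a2(2) lt] .
        then show ?thesis using a1 a2 by simp
      qed
    qed
    then show False using B(3) by simp
  qed
  have near: "z \<in> e \<or> (\<exists>w\<in>e. d z w < r + MA)" if ez: "e \<in> \<E>" "z \<in> N e" for e z
  proof -
    { assume "z \<notin> e"
      then obtain a where a: "a \<in> \<A>" "att a e" "z \<in> a" "z \<in> Q" using ez unfolding N_def by blast
      then obtain x1 y1 where 1: "x1 \<in> a" "x1 \<in> Q" "y1 \<in> e" "d x1 y1 < r" unfolding att_def by blast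
      have C: "z \<in> C" "x1 \<in> C" "y1 \<in> C" using a 1 QC EQ ez(1) by blast+
      have "d z y1 \<le> d z x1 + d x1 y1" using trid C by blast
      moreover have "d z x1 \<le> MA" using Amesh a 1 by blast
      ultimately have "d z y1 < r + MA" using 1 by linarith
      then have ?thesis using 1 by blast }
    then show ?thesis by blast
  qed
  have meshN: "d x y \<le> \<phi> + 2*MA + 2*r" if e: "e \<in> \<E>" and xy: "x \<in> N e" "y \<in> N e" for e x y
  proof -
    have xC: "x \<in> C" and yC: "y \<in> C" using xy e sub QC unfolding \<B>_def by blast+
    have eC: "\<And>w. w \<in> e \<Longrightarrow> w \<in> C" using EQ e QC by blast
    consider "x \<in> e" "y \<in> e" | w2 where "x \<in> e" "w2 \<in> e" "d y w2 < r + MA"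
      | w1 where "w1 \<in> e" "d x w1 < r + MA" "y \<in> e"
      | w1 w2 where "w1 \<in> e" "d x w1 < r + MA" "w2 \<in> e" "d y w2 < r + MA"
      using near[OF e xy(1)] near[OF e xy(2)] by blast
    then show ?thesis
    proof cases
      case 1 then show ?thesis using Emesh[OF e] MA0 r0 by fastforce
    next
      case (2 w2)
      have "d x y \<le> d x w2 + d w2 y" using trid xC yC eC 2 by blast
      moreover have "d w2 y = d y w2" using symd yC eC 2 by blast
      moreover have "d x w2 \<le> \<phi>" using Emesh[OF e] 2 by blast
      ultimately show ?thesis using 2 MA0 r0 by linarith
    next
      case (3 w1)
      have "d x y \<le> d x w1 + d w1 y" using trid xC yC eC 3 by blast
      moreover have "d w1 y \<le> \<phi>" using Emesh[OF e] 3 by blast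
      ultimately show ?thesis using 3 MA0 r0 by linarith
    next
      case (4 w1 w2)
      have "d x y \<le> d x w1 + d w1 y" using trid xC yC eC 4 by blast
      moreover have "d w1 y \<le> d w1 w2 + d w2 y" using trid xC yC eC 4 by blast
      moreover have "d w2 y = d y w2" using symd yC eC 4 by blast
      moreover have "d w1 w2 \<le> \<phi>" using Emesh[OF e] 4 by blast
      ultimately show ?thesis using 4 MA0 r0 by linarith
    qed
  qed
  have mesh: "d x y \<le> \<phi> + 2*MA + 2*r" if "B \<in> \<B>" "x \<in> B" "y \<in> B" for B x y
  proof -
    { assume "B \<in> N ` \<E>"
      then have ?thesis using meshN that by blast }
    moreover
    { assume "B \<in> LO"
      then obtain a where a: "a \<in> \<A>" "B = a \<inter> Q" unfolding LO_def by blast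
      then have "d x y \<le> MA" using Amesh that by blast
      then have ?thesis using phi0 r0 MA0 by linarith }
    ultimately show ?thesis using that(1) unfolding \<B>_def by blast
  qed
  have cov1: "\<Union>\<E> \<subseteq> \<Union>\<B>" unfolding \<B>_def N_def by blast
  have cov2: "a \<inter> Q \<subseteq> \<Union>\<B>" if a: "a \<in> \<A>" for a
  proof (cases "\<exists>e\<in>\<E>. att a e")
    case True
    then obtain e where "e \<in> \<E>" "att a e" by blast
    then have "a \<inter> Q \<subseteq> N e" "N e \<in> \<B>" using a unfolding N_def \<B>_def by blast+
    then show ?thesis by blast
  next
    case False
    then have "a \<inter> Q \<in> \<B>" using a unfolding LO_def \<B>_def by blast
    then show ?thesis by blast
  qed
  show ?thesis
  proof (rule exI[of _ \<B>], intro conjI ballI)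
    show "r_disjoint d r \<B>" by (rule r_disjointI) (rule disj)
  qed (use sub mesh cov1 cov2 in auto)
qed

lemma sat_cover:
  fixes d :: "'a \<Rightarrow> 'a \<Rightarrow> real"
  assumes symd: "\<And>x y. x \<in> C \<Longrightarrow> y \<in> C \<Longrightarrow> d x y = d y x"
    and trid: "\<And>x y z. x \<in> C \<Longrightarrow> y \<in> C \<Longrightarrow> z \<in> C \<Longrightarrow> d x z \<le> d x y + d y z"
    and QC: "Q \<subseteq> C" and AC: "\<And>j a. j \<le> k \<Longrightarrow> a \<in> \<A> j \<Longrightarrow> a \<subseteq> C"
    and E: "good_cover d Q T \<phi> k E"
    and Adisj: "\<And>j. j \<le> k \<Longrightarrow> r_disjoint d r (\<A> j)"
    and Amesh: "\<And>j a x y. j \<le> k \<Longrightarrow> a \<in> \<A> j \<Longrightarrow> x \<in> a \<Longrightarrow> y \<in> a \<Longrightarrow> d x y \<le> MA"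
    and T: "2*r + MA \<le> T" and phi0: "0 \<le> \<phi>" and MA0: "0 \<le> MA" and r0: "0 < r"
  shows "\<exists>\<B>. good_cover d Q r (\<phi> + 2*MA + 2*r) k \<B> \<and> (\<forall>j\<le>k. \<forall>a\<in>\<A> j. a \<inter> Q \<subseteq> \<Union>(\<B> j))"
proof -
  have "\<forall>j. \<exists>\<B>. j \<le> k \<longrightarrow> ((\<forall>b\<in>\<B>. b \<subseteq> Q) \<and> r_disjoint d r \<B>
      \<and> (\<forall>b\<in>\<B>. \<forall>x\<in>b. \<forall>y\<in>b. d x y \<le> \<phi> + 2*MA + 2*r)
      \<and> \<Union>(E j) \<subseteq> \<Union>\<B> \<and> (\<forall>a\<in>\<A> j. a \<inter> Q \<subseteq> \<Union>\<B>))"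
  proof
    fix j
    show "\<exists>\<B>. j \<le> k \<longrightarrow> ((\<forall>b\<in>\<B>. b \<subseteq> Q) \<and> r_disjoint d r \<B>
      \<and> (\<forall>b\<in>\<B>. \<forall>x\<in>b. \<forall>y\<in>b. d x y \<le> \<phi> + 2*MA + 2*r)
      \<and> \<Union>(E j) \<subseteq> \<Union>\<B> \<and> (\<forall>a\<in>\<A> j. a \<inter> Q \<subseteq> \<Union>\<B>))"
    proof (cases "j \<le> k")
      case True
      from sat_family[OF symd trid QC AC[OF True] good_coverD(1)[OF E True] good_coverD(2)[OF E True]
            good_coverD(3)[OF E True] Adisj[OF True] Amesh[OF True] T phi0 MA0 r0]
      obtain B0 where "(\<forall>b\<in>B0. b \<subseteq> Q) \<and> r_disjoint d r B0
      \<and> (\<forall>b\<in>B0. \<forall>x\<in>b. \<forall>y\<in>b. d x y \<le> \<phi> + 2*MA + 2*r)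
      \<and> \<Union>(E j) \<subseteq> \<Union>B0 \<and> (\<forall>a\<in>\<A> j. a \<inter> Q \<subseteq> \<Union>B0)" ..
      then show ?thesis by (intro exI[of _ B0] impI)
    qed simp
  qed
  then obtain \<B> where B0: "\<forall>j. j \<le> k \<longrightarrow> ((\<forall>b\<in>\<B> j. b \<subseteq> Q) \<and> r_disjoint d r (\<B> j)
      \<and> (\<forall>b\<in>\<B> j. \<forall>x\<in>b. \<forall>y\<in>b. d x y \<le> \<phi> + 2*MA + 2*r)
      \<and> \<Union>(E j) \<subseteq> \<Union>(\<B> j) \<and> (\<forall>a\<in>\<A> j. a \<inter> Q \<subseteq> \<Union>(\<B> j)))"
    by (rule choice[THEN exE])
  have B: "(\<forall>b\<in>\<B> j. b \<subseteq> Q) \<and> r_disjoint d r (\<B> j)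
      \<and> (\<forall>b\<in>\<B> j. \<forall>x\<in>b. \<forall>y\<in>b. d x y \<le> \<phi> + 2*MA + 2*r)
      \<and> \<Union>(E j) \<subseteq> \<Union>(\<B> j) \<and> (\<forall>a\<in>\<A> j. a \<inter> Q \<subseteq> \<Union>(\<B> j))" if "j \<le> k" for j
    using B0 that by simp
  have "good_cover d Q r (\<phi> + 2*MA + 2*r) k \<B>"
  proof (rule good_coverI)
    fix x assume "x \<in> Q"
    then obtain i A where iA: "i \<le> k" "A \<in> E i" "x \<in> A" using good_cover_cov[OF E] by blast
    have "\<Union>(E i) \<subseteq> \<Union>(\<B> i)" using B[OF iA(1)] by simp
    then have "x \<in> \<Union>(\<B> i)" using iA by blast
    then show "\<exists>i\<le>k. \<exists>A\<in>\<B> i. x \<in> A" using iA(1) by blast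
  next
    fix i A assume "i \<le> k" "A \<in> \<B> i" then show "A \<subseteq> Q" using B by simp
  next
    fix i assume "i \<le> k" then show "r_disjoint d r (\<B> i)" using B by simp
  next
    fix i A x y assume "i \<le> k" "A \<in> \<B> i" "x \<in> A" "y \<in> A"
    then show "d x y \<le> \<phi> + 2*MA + 2*r" using B by simp
  qed
  moreover have "\<forall>j\<le>k. \<forall>a\<in>\<A> j. a \<inter> Q \<subseteq> \<Union>(\<B> j)" using B by simp
  ultimately show ?thesis by (intro exI[of _ \<B>]) simp
qed

lemma sat_pieces:
  fixes d :: "'a \<Rightarrow> 'a \<Rightarrow> real"
  assumes symd: "\<And>x y. x \<in> C \<Longrightarrow> y \<in> C \<Longrightarrow> d x y = d y x"
    and trid: "\<And>x y z. x \<in> C \<Longrightarrow> y \<in> C \<Longrightarrow> z \<in> C \<Longrightarrow> d x z \<le> d x y + d y z"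
    and QC: "\<And>Q. Q \<in> \<Q> \<Longrightarrow> Q \<subseteq> C" and AC: "\<And>j a. j \<le> k \<Longrightarrow> a \<in> \<A> j \<Longrightarrow> a \<subseteq> C"
    and Qdisj: "r_disjoint d r \<Q>"
    and E: "\<And>Q. Q \<in> \<Q> \<Longrightarrow> \<exists>E. good_cover d Q T \<phi> k E"
    and Adisj: "\<And>j. j \<le> k \<Longrightarrow> r_disjoint d r (\<A> j)"
    and Amesh: "\<And>j a x y. j \<le> k \<Longrightarrow> a \<in> \<A> j \<Longrightarrow> x \<in> a \<Longrightarrow> y \<in> a \<Longrightarrow> d x y \<le> MA"
    and T: "2*r + MA \<le> T" and phi0: "0 \<le> \<phi>" and MA0: "0 \<le> MA" and r0: "0 < r"
  shows "\<exists>\<B>. good_cover d (\<Union>\<Q>) r (\<phi> + 2*MA + 2*r) k \<B>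
           \<and> (\<forall>j\<le>k. \<forall>a\<in>\<A> j. \<forall>x\<in>a. x \<in> \<Union>\<Q> \<longrightarrow> (\<exists>b\<in>\<B> j. x \<in> b))"
proof -
  have "\<forall>Q\<in>\<Q>. \<exists>\<B>. good_cover d Q r (\<phi> + 2*MA + 2*r) k \<B> \<and> (\<forall>j\<le>k. \<forall>a\<in>\<A> j. a \<inter> Q \<subseteq> \<Union>(\<B> j))"
  proof
    fix Q assume Q: "Q \<in> \<Q>"
    obtain EQ where EQ: "good_cover d Q T \<phi> k EQ" using E[OF Q] by blast
    show "\<exists>\<B>. good_cover d Q r (\<phi> + 2*MA + 2*r) k \<B> \<and> (\<forall>j\<le>k. \<forall>a\<in>\<A> j. a \<inter> Q \<subseteq> \<Union>(\<B> j))"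
      by (rule sat_cover[OF symd trid QC[OF Q] AC EQ Adisj Amesh T phi0 MA0 r0])
  qed
  then obtain F where F0: "\<forall>Q\<in>\<Q>. good_cover d Q r (\<phi> + 2*MA + 2*r) k (F Q) \<and> (\<forall>j\<le>k. \<forall>a\<in>\<A> j. a \<inter> Q \<subseteq> \<Union>(F Q j))"
    by (rule bchoice[THEN exE])
  have F: "good_cover d Q r (\<phi> + 2*MA + 2*r) k (F Q) \<and> (\<forall>j\<le>k. \<forall>a\<in>\<A> j. a \<inter> Q \<subseteq> \<Union>(F Q j))" if "Q \<in> \<Q>" for Q
    using F0 that by blast
  have G: "good_cover d (\<Union>\<Q>) r (\<phi> + 2*MA + 2*r) k (\<lambda>j. \<Union>Q\<in>\<Q>. F Q j)"
    by (rule good_cover_union[OF Qdisj]) (use F in simp)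
  have "\<forall>j\<le>k. \<forall>a\<in>\<A> j. \<forall>x\<in>a. x \<in> \<Union>\<Q> \<longrightarrow> (\<exists>b\<in>(\<Union>Q\<in>\<Q>. F Q j). x \<in> b)"
  proof (intro allI impI ballI)
    fix j a x assume j: "j \<le> k" and a: "a \<in> \<A> j" and x: "x \<in> a" "x \<in> \<Union>\<Q>"
    then obtain Q where Q: "Q \<in> \<Q>" "x \<in> Q" by blast
    then have "x \<in> \<Union>(F Q j)" using F[OF Q(1)] j a x by blast
    then show "\<exists>b\<in>(\<Union>Q\<in>\<Q>. F Q j). x \<in> b" using Q by blast
  qed
  then show ?thesis using G by (intro exI[of _ "\<lambda>j. \<Union>Q\<in>\<Q>. F Q j"]) simp
qed

lemma ex_mem_helper: "i \<le> n \<Longrightarrow> X \<in> W i \<Longrightarrow> x \<in> X \<Longrightarrow> \<exists>i\<le>n. \<exists>X\<in>W i. x \<in> X"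
  by blast

lemma glue:
  fixes d :: "'a \<Rightarrow> 'a \<Rightarrow> real" and \<alpha> :: "'a \<Rightarrow> real"
  assumes AZ: "A \<subseteq> Z" and BZ: "B \<subseteq> Z"
    and GA: "good_cover d A r M dd \<A>" and GB: "good_cover d B r M dd \<B>"
    and cons: "\<And>j a x. j \<le> dd \<Longrightarrow> a \<in> \<A> j \<Longrightarrow> x \<in> a \<Longrightarrow> \<alpha> x > 0 \<Longrightarrow> \<exists>b\<in>\<B> j. x \<in> b"
    and covA: "\<And>x. x \<in> Z \<Longrightarrow> \<alpha> x < 1 \<Longrightarrow> x \<in> A"
    and covB: "\<And>x. x \<in> Z \<Longrightarrow> \<alpha> x > 0 \<Longrightarrow> x \<in> B"
    and rng: "\<And>x. x \<in> Z \<Longrightarrow> 0 \<le> \<alpha> x \<and> \<alpha> x \<le> 1"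
    and sep: "\<And>x y. x \<in> Z \<Longrightarrow> y \<in> Z \<Longrightarrow> \<alpha> x + 1 / (real dd + 1) \<le> \<alpha> y \<Longrightarrow> r \<le> d x y \<and> r \<le> d y x"
  shows "\<exists>W. good_cover d Z r M (Suc dd) W"
proof -
  define \<delta> where "\<delta> = 1 / (real dd + 1)"
  define \<theta> where "\<theta> l = 1 - real l * \<delta>" for l :: nat
  define A' where "A' l = (if l \<le> dd then \<A> l else {})" for l
  define B' where "B' l = (if l = 0 \<or> Suc dd < l then {} else \<B> (l - 1))" for l
  define W where "W l = (\<lambda>a. a \<inter> {x. \<alpha> x \<le> \<theta> l}) ` A' l \<union> (\<lambda>b. b \<inter> {x. \<theta> l + \<delta> \<le> \<alpha> x}) ` B' l" for l
  have dpos: "\<delta> > 0" unfolding \<delta>_def by simp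
  have A'Z: "a \<subseteq> Z" if "a \<in> A' l" for a l
    using that good_coverD(1)[OF GA] AZ unfolding A'_def by (auto split: if_splits)
  have B'E: "l - 1 \<le> dd \<and> b \<in> \<B> (l - 1)" if "b \<in> B' l" for b l
    using that unfolding B'_def by (cases "l = 0 \<or> Suc dd < l") auto
  have B'Z: "b \<subseteq> Z" if "b \<in> B' l" for b l
    using B'E[OF that] good_coverD(1)[OF GB] BZ by blast
  have A'disj: "r_disjoint d r (A' l)" for l
    using good_coverD(2)[OF GA] unfolding A'_def r_disjoint_def by auto
  have B'disj: "r_disjoint d r (B' l)" for l
  proof (cases "l = 0 \<or> Suc dd < l")
    case True then show ?thesis unfolding B'_def r_disjoint_def by simp
  next
    case False
    then have "l - 1 \<le> dd" by arith
    then show ?thesis using good_coverD(2)[OF GB] False unfolding B'_def by simp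
  qed
  have A'mesh: "d x y \<le> M" if "a \<in> A' l" "x \<in> a" "y \<in> a" for a l x y
    using that good_coverD(3)[OF GA] unfolding A'_def by (auto split: if_splits)
  have B'mesh: "d x y \<le> M" if "b \<in> B' l" "x \<in> b" "y \<in> b" for b l x y
    using B'E[OF that(1)] that(2,3) good_coverD(3)[OF GB] by blast
  have th: "\<theta> (Suc j) + \<delta> = \<theta> j" for j unfolding \<theta>_def by (simp add: algebra_simps)
  have thdd: "\<theta> dd = \<delta>" unfolding \<theta>_def \<delta>_def by (simp add: field_simps)
  have thmono: "\<theta> dd \<le> \<theta> j" if "j \<le> dd" for j
    unfolding \<theta>_def using that dpos by (simp add: mult_right_mono)
  have th0: "\<theta> j \<le> 1" for j unfolding \<theta>_def using dpos by simp
  show ?thesis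
  proof (rule exI[of _ W], rule good_coverI)
    fix i X assume "i \<le> Suc dd" "X \<in> W i"
    then show "X \<subseteq> Z" unfolding W_def using A'Z B'Z by blast
  next
    fix i X x y assume "i \<le> Suc dd" "X \<in> W i" "x \<in> X" "y \<in> X"
    then show "d x y \<le> M" unfolding W_def using A'mesh B'mesh by blast
  next
    fix i assume "i \<le> Suc dd"
    show "r_disjoint d r (W i)"
    proof (rule r_disjointI)
      fix X Y x y assume X: "X \<in> W i" and Y: "Y \<in> W i" and XY: "X \<noteq> Y" and x: "x \<in> X" and y: "y \<in> Y"
      have xZ: "x \<in> Z" using X x unfolding W_def using A'Z B'Z by blast
      have yZ: "y \<in> Z" using Y y unfolding W_def using A'Z B'Z by blast
      consider a1 where "a1 \<in> A' i" "X = a1 \<inter> {x. \<alpha> x \<le> \<theta> i}"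
        | b1 where "b1 \<in> B' i" "X = b1 \<inter> {x. \<theta> i + \<delta> \<le> \<alpha> x}"
        using X unfolding W_def by blast
      then show "r \<le> d x y"
      proof cases
        case (1 a1)
        consider a2 where "a2 \<in> A' i" "Y = a2 \<inter> {x. \<alpha> x \<le> \<theta> i}"
          | b2 where "b2 \<in> B' i" "Y = b2 \<inter> {x. \<theta> i + \<delta> \<le> \<alpha> x}"
          using Y unfolding W_def by blast
        then show ?thesis
        proof cases
          case (1 a2)
          with \<open>X = a1 \<inter> _\<close> \<open>a1 \<in> A' i\<close> XY have "a1 \<noteq> a2" by blast
          then show ?thesis using r_disjointD[OF A'disj \<open>a1 \<in> A' i\<close> \<open>a2 \<in> A' i\<close>] x y 1 \<open>X = a1 \<inter> _\<close> by blast
        next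
          case (2 b2)
          have "\<alpha> x + \<delta> \<le> \<alpha> y" using x y \<open>X = a1 \<inter> _\<close> 2 by auto
          then show ?thesis using sep xZ yZ unfolding \<delta>_def by blast
        qed
      next
        case (2 b1)
        consider a2 where "a2 \<in> A' i" "Y = a2 \<inter> {x. \<alpha> x \<le> \<theta> i}"
          | b2 where "b2 \<in> B' i" "Y = b2 \<inter> {x. \<theta> i + \<delta> \<le> \<alpha> x}"
          using Y unfolding W_def by blast
        then show ?thesis
        proof cases
          case (1 a2)
          have "\<alpha> y + \<delta> \<le> \<alpha> x" using x y \<open>X = b1 \<inter> _\<close> 1 by auto
          then show ?thesis using sep xZ yZ unfolding \<delta>_def by blast
        next
          case (2 b2)
          with \<open>X = b1 \<inter> _\<close> \<open>b1 \<in> B' i\<close> XY have "b1 \<noteq> b2" by blast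
          then show ?thesis using r_disjointD[OF B'disj \<open>b1 \<in> B' i\<close> \<open>b2 \<in> B' i\<close>] x y 2 \<open>X = b1 \<inter> _\<close> by blast
        qed
      qed
    qed
  next
    fix x assume xZ: "x \<in> Z"
    show "\<exists>i\<le>Suc dd. \<exists>X\<in>W i. x \<in> X"
    proof (cases "\<alpha> x < 1")
      case True
      then have "x \<in> A" using covA xZ by blast
      then obtain j a where j: "j \<le> dd" "a \<in> \<A> j" "x \<in> a" using good_cover_cov[OF GA] by blast
      have aA': "a \<in> A' j" using j unfolding A'_def by simp
      show ?thesis
      proof (cases "\<alpha> x \<le> \<theta> j")
        case True
        then have 1: "x \<in> a \<inter> {x. \<alpha> x \<le> \<theta> j}" "a \<inter> {x. \<alpha> x \<le> \<theta> j} \<in> W j"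
          using j aA' unfolding W_def by auto
        have "j \<le> Suc dd" using j(1) by simp
        from ex_mem_helper[where W=W, OF this 1(2) 1(1)] show ?thesis .
      next
        case False
        then have "\<alpha> x > \<delta>" using thmono[OF j(1)] thdd by linarith
        then have "\<alpha> x > 0" using dpos by linarith
        then obtain b where b: "b \<in> \<B> j" "x \<in> b" using cons j by blast
        have bB': "b \<in> B' (Suc j)" using b j unfolding B'_def by simp
        have "\<theta> (Suc j) + \<delta> \<le> \<alpha> x" using False th[of j] by linarith
        then have 1: "x \<in> b \<inter> {x. \<theta> (Suc j) + \<delta> \<le> \<alpha> x}" "b \<inter> {x. \<theta> (Suc j) + \<delta> \<le> \<alpha> x} \<in> W (Suc j)"
          using b bB' unfolding W_def by auto
        have "Suc j \<le> Suc dd" using j(1) by simp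
        from ex_mem_helper[where W=W, OF this 1(2) 1(1)] show ?thesis .
      qed
    next
      case False
      then have "\<alpha> x > 0" by linarith
      then have "x \<in> B" using covB xZ by blast
      then obtain j b where j: "j \<le> dd" "b \<in> \<B> j" "x \<in> b" using good_cover_cov[OF GB] by blast
      have bB': "b \<in> B' (Suc j)" using j unfolding B'_def by simp
      have "\<theta> (Suc j) + \<delta> \<le> \<alpha> x" using False th[of j] th0[of j] by linarith
      then have 1: "x \<in> b \<inter> {x. \<theta> (Suc j) + \<delta> \<le> \<alpha> x}" "b \<inter> {x. \<theta> (Suc j) + \<delta> \<le> \<alpha> x} \<in> W (Suc j)"
        using j bB' unfolding W_def by auto
      have "Suc j \<le> Suc dd" using j(1) by simp
      from ex_mem_helper[where W=W, OF this 1(2) 1(1)] show ?thesis .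
    qed
  qed
qed



locale hsetup =
  fixes G :: "('g, 'b) monoid_scheme" and S :: "'g set"
    and act :: "'g \<Rightarrow> 'x::metric_space \<Rightarrow> 'x" and x0 :: 'x
  assumes grp: "group G"
    and S_fin: "finite S" and S_sub: "S \<subseteq> carrier G"
    and S_sym: "\<forall>s\<in>S. inv\<^bsub>G\<^esub> s \<in> S"
    and S_gen: "generate G S = carrier G"
    and act_one: "\<forall>x. act \<one>\<^bsub>G\<^esub> x = x"
    and act_mult: "\<forall>g\<in>carrier G. \<forall>h\<in>carrier G. \<forall>x. act (g \<otimes>\<^bsub>G\<^esub> h) x = act g (act h x)"
    and act_isom: "\<forall>g\<in>carrier G. \<forall>x y. dist (act g x) (act g y) = dist x y"
begin

interpretation G: group G by (rule grp)

abbreviation wprod :: "'g list \<Rightarrow> 'g" where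
  "wprod ws \<equiv> foldr (\<otimes>\<^bsub>G\<^esub>) ws \<one>\<^bsub>G\<^esub>"

lemma wprod_closed: "set ws \<subseteq> carrier G \<Longrightarrow> wprod ws \<in> carrier G"
  by (induction ws) auto

lemma wprod_append:
  assumes "set xs \<subseteq> carrier G" "set ys \<subseteq> carrier G"
  shows "wprod (xs @ ys) = wprod xs \<otimes>\<^bsub>G\<^esub> wprod ys"
  using assms(1)
proof (induction xs)
  case Nil then show ?case using wprod_closed[OF assms(2)] by simp
next
  case (Cons x xs)
  then have x: "x \<in> carrier G" and xs: "set xs \<subseteq> carrier G" by auto
  have "wprod ((x # xs) @ ys) = x \<otimes>\<^bsub>G\<^esub> wprod (xs @ ys)" by simp
  also have "\<dots> = x \<otimes>\<^bsub>G\<^esub> (wprod xs \<otimes>\<^bsub>G\<^esub> wprod ys)" using Cons xs by simp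
  also have "\<dots> = (x \<otimes>\<^bsub>G\<^esub> wprod xs) \<otimes>\<^bsub>G\<^esub> wprod ys"
    using x wprod_closed[OF xs] wprod_closed[OF assms(2)] by (simp add: G.m_assoc)
  finally show ?case by simp
qed

lemma wprod_inv:
  assumes "set ws \<subseteq> carrier G"
  shows "inv\<^bsub>G\<^esub> (wprod ws) = wprod (map (\<lambda>y. inv\<^bsub>G\<^esub> y) (rev ws))"
  using assms
proof (induction ws)
  case Nil then show ?case by simp
next
  case (Cons x xs)
  then have x: "x \<in> carrier G" and xs: "set xs \<subseteq> carrier G" by auto
  have xs': "set (map (\<lambda>y. inv\<^bsub>G\<^esub> y) (rev xs)) \<subseteq> carrier G" using xs by auto
  have "inv\<^bsub>G\<^esub> (wprod (x # xs)) = inv\<^bsub>G\<^esub> (wprod xs) \<otimes>\<^bsub>G\<^esub> inv\<^bsub>G\<^esub> x"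
    using x wprod_closed[OF xs] by (simp add: G.inv_mult_group)
  also have "\<dots> = wprod (map (\<lambda>y. inv\<^bsub>G\<^esub> y) (rev xs)) \<otimes>\<^bsub>G\<^esub> wprod [inv\<^bsub>G\<^esub> x]"
    using Cons xs x by simp
  also have "\<dots> = wprod (map (\<lambda>y. inv\<^bsub>G\<^esub> y) (rev xs) @ [inv\<^bsub>G\<^esub> x])"
    by (rule wprod_append[symmetric]) (use xs' x in auto)
  finally show ?case by simp
qed

lemma words_exist:
  assumes "g \<in> carrier G"
  shows "\<exists>ws. set ws \<subseteq> S \<and> wprod ws = g"
proof -
  have "g \<in> generate G S" using assms S_gen by simp
  then show ?thesis
  proof (induction rule: generate.induct)
    case one then show ?case by (intro exI[of _ "[]"]) simp
  next
    case (incl h) then show ?case using S_sub by (intro exI[of _ "[h]"]) auto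
  next
    case (inv h) then show ?case using S_sub S_sym by (intro exI[of _ "[inv\<^bsub>G\<^esub> h]"]) auto
  next
    case (eng h1 h2)
    then obtain ws1 ws2 where w: "set ws1 \<subseteq> S" "wprod ws1 = h1" "set ws2 \<subseteq> S" "wprod ws2 = h2" by blast
    have "wprod (ws1 @ ws2) = h1 \<otimes>\<^bsub>G\<^esub> h2"
      using wprod_append[of ws1 ws2] w S_sub by auto
    then show ?case using w by (intro exI[of _ "ws1 @ ws2"]) auto
  qed
qed

abbreviation wl where "wl \<equiv> word_length G S"
abbreviation wd where "wd \<equiv> word_dist G S"

lemma wl_ex:
  assumes "g \<in> carrier G"
  shows "\<exists>ws. length ws = wl g \<and> set ws \<subseteq> S \<and> wprod ws = g"
proof -
  obtain ws where "set ws \<subseteq> S \<and> wprod ws = g" using words_exist[OF assms] by blast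
  then have ex: "\<exists>n ws. length ws = n \<and> set ws \<subseteq> S \<and> wprod ws = g" by blast
  show ?thesis unfolding word_length_def by (rule LeastI_ex[OF ex])
qed

lemma wl_le:
  assumes "set ws \<subseteq> S"
  shows "wl (wprod ws) \<le> length ws"
  unfolding word_length_def by (rule Least_le) (use assms in blast)

lemma wl_mult:
  assumes "g \<in> carrier G" "h \<in> carrier G"
  shows "wl (g \<otimes>\<^bsub>G\<^esub> h) \<le> wl g + wl h"
proof -
  obtain ws1 where 1: "length ws1 = wl g" "set ws1 \<subseteq> S" "wprod ws1 = g" using wl_ex[OF assms(1)] by blast
  obtain ws2 where 2: "length ws2 = wl h" "set ws2 \<subseteq> S" "wprod ws2 = h" using wl_ex[OF assms(2)] by blast
  have "wprod (ws1 @ ws2) = g \<otimes>\<^bsub>G\<^esub> h" using wprod_append[of ws1 ws2] 1 2 S_sub by auto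
  moreover have "wl (wprod (ws1 @ ws2)) \<le> length (ws1 @ ws2)" using wl_le[of "ws1 @ ws2"] 1 2 by simp
  ultimately show ?thesis using 1 2 by simp
qed

lemma wl_inv_le:
  assumes "g \<in> carrier G"
  shows "wl (inv\<^bsub>G\<^esub> g) \<le> wl g"
proof -
  obtain ws where 1: "length ws = wl g" "set ws \<subseteq> S" "wprod ws = g" using wl_ex[OF assms] by blast
  have "inv\<^bsub>G\<^esub> g = wprod (map (\<lambda>y. inv\<^bsub>G\<^esub> y) (rev ws))" using wprod_inv[of ws] 1 S_sub by auto
  moreover have "set (map (\<lambda>y. inv\<^bsub>G\<^esub> y) (rev ws)) \<subseteq> S" using 1 S_sym by auto
  ultimately show ?thesis using wl_le[of "map (\<lambda>y. inv\<^bsub>G\<^esub> y) (rev ws)"] 1 by simp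
qed

lemma wd_sym:
  assumes "g \<in> carrier G" "h \<in> carrier G"
  shows "wd g h = wd h g"
proof -
  have e: "inv\<^bsub>G\<^esub> (inv\<^bsub>G\<^esub> g \<otimes>\<^bsub>G\<^esub> h) = inv\<^bsub>G\<^esub> h \<otimes>\<^bsub>G\<^esub> g"
    using assms by (simp add: G.inv_mult_group)
  have e2: "inv\<^bsub>G\<^esub> (inv\<^bsub>G\<^esub> h \<otimes>\<^bsub>G\<^esub> g) = inv\<^bsub>G\<^esub> g \<otimes>\<^bsub>G\<^esub> h"
    using assms by (simp add: G.inv_mult_group)
  have "wl (inv\<^bsub>G\<^esub> h \<otimes>\<^bsub>G\<^esub> g) \<le> wl (inv\<^bsub>G\<^esub> g \<otimes>\<^bsub>G\<^esub> h)"
    using wl_inv_le[of "inv\<^bsub>G\<^esub> g \<otimes>\<^bsub>G\<^esub> h"] e assms by simp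
  moreover have "wl (inv\<^bsub>G\<^esub> g \<otimes>\<^bsub>G\<^esub> h) \<le> wl (inv\<^bsub>G\<^esub> h \<otimes>\<^bsub>G\<^esub> g)"
    using wl_inv_le[of "inv\<^bsub>G\<^esub> h \<otimes>\<^bsub>G\<^esub> g"] e2 assms by simp
  ultimately show ?thesis unfolding word_dist_def by simp
qed

lemma wd_tri:
  assumes "g \<in> carrier G" "h \<in> carrier G" "k \<in> carrier G"
  shows "wd g k \<le> wd g h + wd h k"
proof -
  have "inv\<^bsub>G\<^esub> g \<otimes>\<^bsub>G\<^esub> k = (inv\<^bsub>G\<^esub> g \<otimes>\<^bsub>G\<^esub> h) \<otimes>\<^bsub>G\<^esub> (inv\<^bsub>G\<^esub> h \<otimes>\<^bsub>G\<^esub> k)"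
    using assms by (simp add: G.m_assoc[symmetric] G.m_assoc G.r_inv)
  then have "wl (inv\<^bsub>G\<^esub> g \<otimes>\<^bsub>G\<^esub> k) \<le> wl (inv\<^bsub>G\<^esub> g \<otimes>\<^bsub>G\<^esub> h) + wl (inv\<^bsub>G\<^esub> h \<otimes>\<^bsub>G\<^esub> k)"
    using wl_mult[of "inv\<^bsub>G\<^esub> g \<otimes>\<^bsub>G\<^esub> h" "inv\<^bsub>G\<^esub> h \<otimes>\<^bsub>G\<^esub> k"] assms by simp
  then show ?thesis unfolding word_dist_def by simp
qed

lemma wd_left:
  assumes "a \<in> carrier G" "g \<in> carrier G" "h \<in> carrier G"
  shows "wd (a \<otimes>\<^bsub>G\<^esub> g) (a \<otimes>\<^bsub>G\<^esub> h) = wd g h"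
proof -
  have "inv\<^bsub>G\<^esub> (a \<otimes>\<^bsub>G\<^esub> g) \<otimes>\<^bsub>G\<^esub> (a \<otimes>\<^bsub>G\<^esub> h) = inv\<^bsub>G\<^esub> g \<otimes>\<^bsub>G\<^esub> h"
    using assms by (simp add: G.inv_mult_group G.m_assoc[symmetric]) (simp add: G.m_assoc)
  then show ?thesis unfolding word_dist_def by simp
qed

lemma wd_nonneg: "0 \<le> wd g h" unfolding word_dist_def by simp

definition L0 where "L0 = (\<Sum>s\<in>S. dist (act s x0) x0)"

lemma L0_nonneg: "0 \<le> L0" unfolding L0_def by (simp add: sum_nonneg)

lemma dist_word:
  assumes "set ws \<subseteq> S"
  shows "dist x0 (act (wprod ws) x0) \<le> real (length ws) * L0"
  using assms
proof (induction ws)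
  case Nil then show ?case using act_one by simp
next
  case (Cons s ws)
  then have s: "s \<in> S" and ws: "set ws \<subseteq> S" by auto
  have sc: "s \<in> carrier G" using s S_sub by blast
  have wc: "wprod ws \<in> carrier G" using wprod_closed ws S_sub by blast
  have "act (wprod (s # ws)) x0 = act s (act (wprod ws) x0)" using act_mult sc wc by simp
  then have "dist x0 (act (wprod (s # ws)) x0) \<le> dist x0 (act s x0) + dist (act s x0) (act s (act (wprod ws) x0))"
    by (simp add: dist_triangle)
  also have "dist (act s x0) (act s (act (wprod ws) x0)) = dist x0 (act (wprod ws) x0)"
    using act_isom sc by simp
  also have "dist x0 (act s x0) \<le> L0"
  proof -
    have "dist (act s x0) x0 \<le> L0" unfolding L0_def by (rule member_le_sum) (use s S_fin in auto)
    then show ?thesis by (simp add: dist_commute)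
  qed
  finally show ?case using Cons.IH[OF ws] by (simp add: algebra_simps)
qed

lemma orbit_lip:
  assumes "g \<in> carrier G" "h \<in> carrier G"
  shows "dist (act g x0) (act h x0) \<le> L0 * wd g h"
proof -
  have gi: "inv\<^bsub>G\<^esub> g \<in> carrier G" using assms by simp
  have "dist (act g x0) (act h x0) = dist (act (inv\<^bsub>G\<^esub> g) (act g x0)) (act (inv\<^bsub>G\<^esub> g) (act h x0))"
    using act_isom gi by simp
  also have "act (inv\<^bsub>G\<^esub> g) (act g x0) = x0"
    using act_mult[rule_format, OF gi assms(1)] act_one assms by simp
  also have "act (inv\<^bsub>G\<^esub> g) (act h x0) = act (inv\<^bsub>G\<^esub> g \<otimes>\<^bsub>G\<^esub> h) x0"
    using act_mult gi assms by simp
  finally have e: "dist (act g x0) (act h x0) = dist x0 (act (inv\<^bsub>G\<^esub> g \<otimes>\<^bsub>G\<^esub> h) x0)" .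
  obtain ws where w: "length ws = wl (inv\<^bsub>G\<^esub> g \<otimes>\<^bsub>G\<^esub> h)" "set ws \<subseteq> S" "wprod ws = inv\<^bsub>G\<^esub> g \<otimes>\<^bsub>G\<^esub> h"
    using wl_ex[of "inv\<^bsub>G\<^esub> g \<otimes>\<^bsub>G\<^esub> h"] gi assms by blast
  show ?thesis using e dist_word[OF w(2)] w unfolding word_dist_def by (simp add: mult.commute)
qed

lemma orbit_dist_translate:
  assumes "g \<in> carrier G" "h \<in> carrier G"
  shows "dist (act (inv\<^bsub>G\<^esub> g \<otimes>\<^bsub>G\<^esub> h) x0) x0 = dist (act h x0) (act g x0)"
proof -
  have gi: "inv\<^bsub>G\<^esub> g \<in> carrier G" using assms by simp
  have "dist (act h x0) (act g x0) = dist (act (inv\<^bsub>G\<^esub> g) (act h x0)) (act (inv\<^bsub>G\<^esub> g) (act g x0))"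
    using act_isom gi by simp
  also have "act (inv\<^bsub>G\<^esub> g) (act g x0) = x0"
    using act_mult[rule_format, OF gi assms(1)] act_one assms by simp
  also have "act (inv\<^bsub>G\<^esub> g) (act h x0) = act (inv\<^bsub>G\<^esub> g \<otimes>\<^bsub>G\<^esub> h) x0"
    using act_mult gi assms by simp
  finally show ?thesis by simp
qed

end



fun lseq :: "real \<Rightarrow> real \<Rightarrow> nat \<Rightarrow> real" where
  "lseq a c 0 = c"
| "lseq a c (Suc i) = a * lseq a c i + c"

lemma lseq_nonneg: "0 \<le> a \<Longrightarrow> 0 \<le> c \<Longrightarrow> 0 \<le> lseq a c i"
  by (induction i) auto

lemma max_lip: "(a::real) - b \<le> d \<Longrightarrow> 0 \<le> d \<Longrightarrow> max 0 a - max 0 b \<le> d"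
  by (simp add: max_def)

lemma infdist_close:
  assumes "V \<noteq> {}" "infdist y V < e"
  shows "\<exists>v\<in>V. dist y v < e"
proof -
  have "(INF a\<in>V. dist y a) < e" using assms by (simp add: infdist_notempty)
  moreover have "bdd_below (dist y ` V)" by (rule bdd_belowI[of _ 0]) auto
  ultimately show ?thesis using cINF_less_iff[OF assms(1)] by blast
qed

context hsetup
begin

interpretation G: group G by (rule grp)

lemma translate_cover:
  assumes g0: "g0 \<in> carrier G" and QC: "Q \<subseteq> carrier G" and WC: "W \<subseteq> carrier G"
    and QW: "\<And>h. h \<in> Q \<Longrightarrow> inv\<^bsub>G\<^esub> g0 \<otimes>\<^bsub>G\<^esub> h \<in> W"
    and V: "good_cover wd W t M k \<V>"
  shows "good_cover wd Q t M k (\<lambda>j. (\<lambda>V. (\<lambda>v. g0 \<otimes>\<^bsub>G\<^esub> v) ` V \<inter> Q) ` \<V> j)"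
proof (rule good_coverI)
  fix i A assume "i \<le> k" "A \<in> (\<lambda>V. (\<lambda>v. g0 \<otimes>\<^bsub>G\<^esub> v) ` V \<inter> Q) ` \<V> i"
  then show "A \<subseteq> Q" by blast
next
  fix i A x y assume i: "i \<le> k" and A: "A \<in> (\<lambda>V. (\<lambda>v. g0 \<otimes>\<^bsub>G\<^esub> v) ` V \<inter> Q) ` \<V> i"
    and x: "x \<in> A" and y: "y \<in> A"
  then obtain V0 where V0: "V0 \<in> \<V> i" "A = (\<lambda>v. g0 \<otimes>\<^bsub>G\<^esub> v) ` V0 \<inter> Q" by blast
  then obtain v1 v2 where v: "v1 \<in> V0" "v2 \<in> V0" "x = g0 \<otimes>\<^bsub>G\<^esub> v1" "y = g0 \<otimes>\<^bsub>G\<^esub> v2" using x y by blast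
  have vc: "v1 \<in> carrier G" "v2 \<in> carrier G" using good_coverD(1)[OF V i V0(1)] v WC by blast+
  have "wd x y = wd v1 v2" using wd_left[OF g0 vc] v by simp
  then show "wd x y \<le> M" using good_coverD(3)[OF V i V0(1) v(1,2)] by simp
next
  fix i assume i: "i \<le> k"
  show "r_disjoint wd t ((\<lambda>V. (\<lambda>v. g0 \<otimes>\<^bsub>G\<^esub> v) ` V \<inter> Q) ` \<V> i)"
  proof (rule r_disjointI)
    fix A B x y assume A: "A \<in> (\<lambda>V. (\<lambda>v. g0 \<otimes>\<^bsub>G\<^esub> v) ` V \<inter> Q) ` \<V> i"
      and B: "B \<in> (\<lambda>V. (\<lambda>v. g0 \<otimes>\<^bsub>G\<^esub> v) ` V \<inter> Q) ` \<V> i" and AB: "A \<noteq> B" and x: "x \<in> A" and y: "y \<in> B"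
    obtain V1 where V1: "V1 \<in> \<V> i" "A = (\<lambda>v. g0 \<otimes>\<^bsub>G\<^esub> v) ` V1 \<inter> Q" using A by blast
    obtain V2 where V2: "V2 \<in> \<V> i" "B = (\<lambda>v. g0 \<otimes>\<^bsub>G\<^esub> v) ` V2 \<inter> Q" using B by blast
    have ne: "V1 \<noteq> V2" using AB V1 V2 by blast
    obtain v1 where v1: "v1 \<in> V1" "x = g0 \<otimes>\<^bsub>G\<^esub> v1" using x V1 by blast
    obtain v2 where v2: "v2 \<in> V2" "y = g0 \<otimes>\<^bsub>G\<^esub> v2" using y V2 by blast
    have vc: "v1 \<in> carrier G" "v2 \<in> carrier G"
      using good_coverD(1)[OF V i V1(1)] good_coverD(1)[OF V i V2(1)] v1 v2 WC by blast+
    have "wd x y = wd v1 v2" using wd_left[OF g0 vc] v1 v2 by simp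
    then show "t \<le> wd x y" using r_disjointD[OF good_coverD(2)[OF V i] V1(1) V2(1) ne v1(1) v2(1)] by simp
  qed
next
  fix x assume x: "x \<in> Q"
  have xc: "x \<in> carrier G" using x QC by blast
  have "inv\<^bsub>G\<^esub> g0 \<otimes>\<^bsub>G\<^esub> x \<in> W" using QW x by blast
  then obtain i V0 where iV: "i \<le> k" "V0 \<in> \<V> i" "inv\<^bsub>G\<^esub> g0 \<otimes>\<^bsub>G\<^esub> x \<in> V0" using good_cover_cov[OF V] by blast
  have "g0 \<otimes>\<^bsub>G\<^esub> (inv\<^bsub>G\<^esub> g0 \<otimes>\<^bsub>G\<^esub> x) = x" using g0 xc by (simp add: G.m_assoc[symmetric])
  then have "x \<in> (\<lambda>v. g0 \<otimes>\<^bsub>G\<^esub> v) ` V0 \<inter> Q" using iV x by (metis IntI image_eqI)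
  then show "\<exists>i\<le>k. \<exists>A\<in>(\<lambda>V. (\<lambda>v. g0 \<otimes>\<^bsub>G\<^esub> v) ` V \<inter> Q) ` \<V> i. x \<in> A" using iV by blast
qed


lemma main_construction:
  fixes k n :: nat and m b c cX bX :: real
  assumes ctrl: "\<forall>R>0. control_function {\<gamma> \<in> carrier G. dist (act \<gamma> x0) x0 \<le> R} wd k (\<lambda>r. m * r + b * R + c)"
    and m0: "0 \<le> m" and b0: "0 \<le> b" and c0: "0 \<le> c"
    and Xc: "control_function (UNIV::'x set) dist n (\<lambda>r. cX*r + bX)" and cX0: "0 \<le> cX" and bX0: "0 \<le> bX"
  shows "asdim_AN_le (carrier G) wd (k+n)"
proof -
  define L where "L = L0 + 1"
  have L0': "0 \<le> L0" by (rule L0_nonneg)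
  have Lpos: "0 < L" using L0' unfolding L_def by simp
  define lam where "lam = L * (real (k+n) + 1)"
  have lampos: "0 < lam" unfolding lam_def using Lpos by simp
  have lamL: "L \<le> lam" unfolding lam_def using Lpos by simp
  define Rc where "Rc = (3*cX + 2) * lam"
  define Mc where "Mc = lseq (m+2) (2*m+2+b*Rc)"
  define Mb where "Mb = lseq (m+2) (b*bX + c)"
  have Rc0: "0 \<le> Rc" unfolding Rc_def using cX0 lampos by simp
  have Mc0: "0 \<le> Mc i" for i unfolding Mc_def by (rule lseq_nonneg) (use m0 b0 Rc0 in auto)
  have Mb0: "0 \<le> Mb i" for i unfolding Mb_def by (rule lseq_nonneg) (use m0 b0 bX0 c0 in auto)
  have symd: "\<And>x y. x \<in> carrier G \<Longrightarrow> y \<in> carrier G \<Longrightarrow> wd x y = wd y x" by (rule wd_sym)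
  have trid: "\<And>x y z. x \<in> carrier G \<Longrightarrow> y \<in> carrier G \<Longrightarrow> z \<in> carrier G \<Longrightarrow> wd x z \<le> wd x y + wd y z"
    by (rule wd_tri)
  have key: "\<exists>W. good_cover wd (carrier G) r (Mc n * r + Mb n) (k+n) W" if r: "0 < r" for r
  proof -
    define Sc where "Sc = lam * r"
    have Sc: "0 < Sc" unfolding Sc_def using lampos r by simp
    have "\<exists>U. good_cover dist (UNIV::'x set) (3*Sc) (cX*(3*Sc) + bX) n U"
      using Xc Sc unfolding control_function_iff by simp
    then obtain U where U: "good_cover dist (UNIV::'x set) (3*Sc) (cX*(3*Sc) + bX) n U" by blast
    define R where "R = Rc * r + bX"
    have R_eq: "R = cX*(3*Sc) + bX + 2*Sc" unfolding R_def Rc_def Sc_def by (simp add: algebra_simps)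
    have "0 \<le> cX*(3*Sc)" using cX0 Sc by simp
    then have Rpos: "0 < R" using R_eq Sc bX0 by linarith
    define f where "f g = act g x0" for g
    define T where "T i = {g \<in> carrier G. \<exists>i'\<le>i. f g \<in> \<Union>(U i')}" for i
    define P where "P i u = {g \<in> T i. \<exists>y\<in>u. dist (f g) y < Sc}" for i u
    define Qs where "Qs i = P i ` U i" for i
    have fl: "dist (f g) (f h) \<le> L * wd g h" if "g \<in> carrier G" "h \<in> carrier G" for g h
    proof -
      have "dist (f g) (f h) \<le> L0 * wd g h" using orbit_lip[OF that] unfolding f_def .
      also have "\<dots> \<le> L * wd g h" unfolding L_def using wd_nonneg[of g h] by (simp add: algebra_simps)
      finally show ?thesis .
    qed
    have T_sub: "T i \<subseteq> carrier G" for i unfolding T_def by blast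
    have Qs_T: "Q \<subseteq> T i" if "Q \<in> Qs i" for Q i using that unfolding Qs_def P_def by blast
    have Qs_sub: "Q \<subseteq> carrier G" if "Q \<in> Qs i" for Q i using Qs_T[OF that] T_sub by blast
    have Qs_disj: "r_disjoint wd r (Qs i)" if i: "i \<le> n" for i
    proof (rule r_disjointI)
      fix A B g h assume A: "A \<in> Qs i" and B: "B \<in> Qs i" and AB: "A \<noteq> B" and g: "g \<in> A" and h: "h \<in> B"
      obtain u1 where u1: "u1 \<in> U i" "A = P i u1" using A unfolding Qs_def by blast
      obtain u2 where u2: "u2 \<in> U i" "B = P i u2" using B unfolding Qs_def by blast
      have ne: "u1 \<noteq> u2" using AB u1 u2 by blast
      obtain y1 where y1: "y1 \<in> u1" "dist (f g) y1 < Sc" using g u1 unfolding P_def by blast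
      obtain y2 where y2: "y2 \<in> u2" "dist (f h) y2 < Sc" using h u2 unfolding P_def by blast
      have d3: "3*Sc \<le> dist y1 y2" using r_disjointD[OF good_coverD(2)[OF U i] u1(1) u2(1) ne y1(1) y2(1)] .
      have "dist y1 y2 \<le> dist y1 (f g) + dist (f g) y2" by (rule dist_triangle)
      moreover have "dist (f g) y2 \<le> dist (f g) (f h) + dist (f h) y2" by (rule dist_triangle)
      moreover have "dist y1 (f g) = dist (f g) y1" by (simp add: dist_commute)
      ultimately have lt: "Sc < dist (f g) (f h)" using y1 y2 d3 by linarith
      have gc: "g \<in> carrier G" "h \<in> carrier G" using g h A B Qs_sub by blast+
      have "lam * r < L * wd g h" using lt fl[OF gc] unfolding Sc_def by linarith
      moreover have "L * r \<le> lam * r" using lamL r by simp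
      ultimately have "L * r \<le> L * wd g h" by linarith
      then show "r \<le> wd g h" using Lpos by simp
    qed
    have Qs_cover: "\<exists>E. good_cover wd Q t (m*t + b*R + c) j E"
      if Q: "Q \<in> Qs i" and i: "i \<le> n" and t: "0 < t" and kj: "k \<le> j" for Q i t j
    proof (cases "Q = {}")
      case True then show ?thesis using good_cover_empty by blast
    next
      case False
      then obtain g0 where g0: "g0 \<in> Q" by blast
      obtain u where u: "u \<in> U i" "Q = P i u" using Q unfolding Qs_def by blast
      have g0c: "g0 \<in> carrier G" using g0 Qs_sub Q by blast
      define W where "W = {\<gamma> \<in> carrier G. dist (act \<gamma> x0) x0 \<le> R}"
      have QW: "inv\<^bsub>G\<^esub> g0 \<otimes>\<^bsub>G\<^esub> h \<in> W" if h: "h \<in> Q" for h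
      proof -
        have hc: "h \<in> carrier G" using h Qs_sub Q by blast
        obtain y1 where y1: "y1 \<in> u" "dist (f h) y1 < Sc" using h u unfolding P_def by blast
        obtain y2 where y2: "y2 \<in> u" "dist (f g0) y2 < Sc" using g0 u unfolding P_def by blast
        have d: "dist y1 y2 \<le> cX*(3*Sc) + bX" using good_coverD(3)[OF U i u(1) y1(1) y2(1)] .
        have "dist (f h) (f g0) \<le> dist (f h) y1 + dist y1 (f g0)" by (rule dist_triangle)
        moreover have "dist y1 (f g0) \<le> dist y1 y2 + dist y2 (f g0)" by (rule dist_triangle)
        moreover have "dist y2 (f g0) = dist (f g0) y2" by (simp add: dist_commute)
        ultimately have "dist (f h) (f g0) \<le> R" using y1 y2 d R_eq by linarith
        then have "dist (act (inv\<^bsub>G\<^esub> g0 \<otimes>\<^bsub>G\<^esub> h) x0) x0 \<le> R"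
          using orbit_dist_translate[OF g0c hc] unfolding f_def by simp
        moreover have "inv\<^bsub>G\<^esub> g0 \<otimes>\<^bsub>G\<^esub> h \<in> carrier G" using g0c hc by simp
        ultimately show ?thesis unfolding W_def by blast
      qed
      have "control_function W wd k (\<lambda>r. m * r + b * R + c)" using ctrl Rpos unfolding W_def by blast
      then have "\<exists>\<V>. good_cover wd W t (m*t + b*R + c) k \<V>" using t unfolding control_function_iff by simp
      then obtain \<V> where V: "good_cover wd W t (m*t + b*R + c) k \<V>" by blast
      have WC: "W \<subseteq> carrier G" unfolding W_def by blast
      have "good_cover wd Q t (m*t + b*R + c) k (\<lambda>j. (\<lambda>V. (\<lambda>v. g0 \<otimes>\<^bsub>G\<^esub> v) ` V \<inter> Q) ` \<V> j)"
        by (rule translate_cover[OF g0c Qs_sub[OF Q] WC QW V])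
      from good_cover_pad[OF this kj] show ?thesis by blast
    qed
    have stage: "\<exists>W. good_cover wd (T i) r (Mc i * r + Mb i) (k+i) W" if "i \<le> n" for i
      using that
    proof (induction i)
      case 0
      have U0: "\<Union>(Qs 0) = T 0"
      proof
        show "\<Union>(Qs 0) \<subseteq> T 0" using Qs_T by blast
        show "T 0 \<subseteq> \<Union>(Qs 0)"
        proof
          fix g assume g: "g \<in> T 0"
          then obtain u where u: "u \<in> U 0" "f g \<in> u" unfolding T_def by auto
          then have "g \<in> P 0 u" using g Sc unfolding P_def by force
          then show "g \<in> \<Union>(Qs 0)" using u unfolding Qs_def by blast
        qed
      qed
      have t0: "0 < 2*r" using r by simp
      have ex: "\<exists>\<B>. good_cover wd (\<Union>(Qs 0)) r ((m*(2*r) + b*R + c) + 2*0 + 2*r) k \<B>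
           \<and> (\<forall>j\<le>k. \<forall>a\<in>(\<lambda>_. {}) j. \<forall>x\<in>a. x \<in> \<Union>(Qs 0) \<longrightarrow> (\<exists>b\<in>\<B> j. x \<in> b))"
      proof -
        have E: "\<And>Q. Q \<in> Qs 0 \<Longrightarrow> \<exists>E. good_cover wd Q (2*r) (m*(2*r) + b*R + c) k E"
          using Qs_cover[OF _ _ t0] by blast
        have phi0: "0 \<le> m*(2*r) + b*R + c" using m0 b0 c0 r Rpos by simp
        have QD: "r_disjoint wd r (Qs 0)" using Qs_disj by simp
        have AD: "\<And>j. j \<le> k \<Longrightarrow> r_disjoint wd r ((\<lambda>_. {}) j)" unfolding r_disjoint_def by simp
        have AC: "\<And>j a. j \<le> k \<Longrightarrow> a \<in> (\<lambda>_. {}) j \<Longrightarrow> a \<subseteq> carrier G" by simp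
        have AM: "\<And>j a x y. j \<le> k \<Longrightarrow> a \<in> (\<lambda>_. {}) j \<Longrightarrow> x \<in> a \<Longrightarrow> y \<in> a \<Longrightarrow> wd x y \<le> 0" by simp
        have TT: "2*r + 0 \<le> 2*r" by simp
        show ?thesis
          by (rule sat_pieces[OF symd trid Qs_sub AC QD E AD AM TT phi0 order_refl r])
      qed
      then obtain \<B> where B: "good_cover wd (\<Union>(Qs 0)) r ((m*(2*r) + b*R + c) + 2*0 + 2*r) k \<B>"
        by (elim exE conjE)
      have eq: "(m*(2*r) + b*R + c) + 2*0 + 2*r = Mc 0 * r + Mb 0"
        unfolding Mc_def Mb_def R_def by (simp add: algebra_simps)
      have "good_cover wd (T 0) r (Mc 0 * r + Mb 0) (k+0) \<B>" using B unfolding eq U0 by simp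
      then show ?case by (intro exI[of _ \<B>])
    next
      case (Suc i)
      have i: "i \<le> n" "i < n" using Suc.prems by auto
      obtain WA where WA: "good_cover wd (T i) r (Mc i * r + Mb i) (k+i) WA" using Suc.IH i by auto
      define MA where "MA = Mc i * r + Mb i"
      have MA0: "0 \<le> MA" unfolding MA_def using Mc0[of i] Mb0[of i] r by simp
      define t where "t = 2*r + MA"
      have t0: "0 < t" unfolding t_def using MA0 r by simp
      have ex: "\<exists>\<B>. good_cover wd (\<Union>(Qs (Suc i))) r ((m*t + b*R + c) + 2*MA + 2*r) (k+i) \<B>
           \<and> (\<forall>j\<le>k+i. \<forall>a\<in>WA j. \<forall>x\<in>a. x \<in> \<Union>(Qs (Suc i)) \<longrightarrow> (\<exists>b\<in>\<B> j. x \<in> b))"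
      proof -
        have E: "\<And>Q. Q \<in> Qs (Suc i) \<Longrightarrow> \<exists>E. good_cover wd Q t (m*t + b*R + c) (k+i) E"
          by (rule Qs_cover[OF _ Suc.prems t0]) simp_all
        have phi0: "0 \<le> m*t + b*R + c" using m0 b0 c0 t0 Rpos by simp
        have AC: "\<And>j a. j \<le> k + i \<Longrightarrow> a \<in> WA j \<Longrightarrow> a \<subseteq> carrier G"
          using good_coverD(1)[OF WA] T_sub by blast
        have AD: "\<And>j. j \<le> k + i \<Longrightarrow> r_disjoint wd r (WA j)" using good_coverD(2)[OF WA] .
        have AM: "\<And>j a x y. j \<le> k + i \<Longrightarrow> a \<in> WA j \<Longrightarrow> x \<in> a \<Longrightarrow> y \<in> a \<Longrightarrow> wd x y \<le> MA"
          using good_coverD(3)[OF WA] unfolding MA_def by blast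
        have TT: "2*r + MA \<le> t" unfolding t_def by simp
        have QD: "r_disjoint wd r (Qs (Suc i))" using Qs_disj[OF Suc.prems] .
        show ?thesis
          by (rule sat_pieces[OF symd trid Qs_sub AC QD E AD AM TT phi0 MA0 r])
      qed
      then obtain \<B> where B: "good_cover wd (\<Union>(Qs (Suc i))) r ((m*t + b*R + c) + 2*MA + 2*r) (k+i) \<B>"
        and cons0: "\<forall>j\<le>k+i. \<forall>a\<in>WA j. \<forall>x\<in>a. x \<in> \<Union>(Qs (Suc i)) \<longrightarrow> (\<exists>b\<in>\<B> j. x \<in> b)"
        by (elim exE conjE)
      define M where "M = Mc (Suc i) * r + Mb (Suc i)"
      have M_eq: "(m*t + b*R + c) + 2*MA + 2*r = M"
        unfolding M_def t_def MA_def Mc_def Mb_def R_def by (simp add: algebra_simps)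
      have "0 \<le> m*t" using m0 t0 by simp
      moreover have "0 \<le> b*R" using b0 Rpos by simp
      ultimately have MA_le: "MA \<le> M" using M_eq MA0 c0 r by linarith
      define V where "V = \<Union>(U (Suc i))"
      define \<alpha> where "\<alpha> g = (if V = {} then 0 else max 0 (1 - infdist (f g) V / Sc))" for g
      have covB: "x \<in> \<Union>(Qs (Suc i))" if x: "x \<in> T (Suc i)" and ax: "\<alpha> x > 0" for x
      proof -
        have Vne: "V \<noteq> {}" using ax unfolding \<alpha>_def by (auto split: if_splits)
        then have "0 < 1 - infdist (f x) V / Sc" using ax unfolding \<alpha>_def by simp
        then have "infdist (f x) V / Sc < 1" by simp
        then have "infdist (f x) V < Sc" using Sc by (simp add: divide_less_eq)
        then obtain y where y: "y \<in> V" "dist (f x) y < Sc" using infdist_close[OF Vne] by blast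
        then obtain u where u: "u \<in> U (Suc i)" "y \<in> u" unfolding V_def by blast
        have "x \<in> P (Suc i) u" unfolding P_def using x y u by blast
        then show ?thesis using u unfolding Qs_def by blast
      qed
      have covA: "x \<in> T i" if x: "x \<in> T (Suc i)" and ax: "\<alpha> x < 1" for x
      proof -
        obtain i' where i': "i' \<le> Suc i" "f x \<in> \<Union>(U i')" and xc: "x \<in> carrier G"
          using x unfolding T_def by blast
        have "i' \<noteq> Suc i"
        proof
          assume "i' = Suc i"
          then have "f x \<in> V" using i' unfolding V_def by simp
          then have "V \<noteq> {}" "infdist (f x) V = 0" by auto
          then have "\<alpha> x = 1" unfolding \<alpha>_def by simp
          then show False using ax by simp
        qed
        then have "i' \<le> i" using i' by simp
        then show ?thesis unfolding T_def using i' xc by blast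
      qed
      have rng: "0 \<le> \<alpha> x \<and> \<alpha> x \<le> 1" for x
      proof -
        have "0 \<le> infdist (f x) V / Sc" using Sc infdist_nonneg[of "f x" V] by simp
        then show ?thesis unfolding \<alpha>_def by auto
      qed
      have alip: "\<alpha> y - \<alpha> x \<le> dist (f x) (f y) / Sc" for x y
      proof (cases "V = {}")
        case True then show ?thesis unfolding \<alpha>_def using Sc by simp
      next
        case False
        have tri: "infdist (f x) V - infdist (f y) V \<le> dist (f x) (f y)"
          using infdist_triangle_abs[of "f x" V "f y"] by linarith
        have "infdist (f x) V / Sc - infdist (f y) V / Sc \<le> dist (f x) (f y) / Sc"
          using divide_right_mono[OF tri, of Sc] Sc by (simp add: diff_divide_distrib)
        moreover have "0 \<le> dist (f x) (f y) / Sc" using Sc by simp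
        moreover have "\<alpha> y = max 0 (1 - infdist (f y) V / Sc)" "\<alpha> x = max 0 (1 - infdist (f x) V / Sc)"
          unfolding \<alpha>_def using False by simp_all
        ultimately show ?thesis using max_lip[of "1 - infdist (f y) V / Sc" "1 - infdist (f x) V / Sc" "dist (f x) (f y) / Sc"]
          by simp
      qed
      have sep: "r \<le> wd x y \<and> r \<le> wd y x"
        if xy: "x \<in> T (Suc i)" "y \<in> T (Suc i)" and a: "\<alpha> x + 1 / (real (k+i) + 1) \<le> \<alpha> y" for x y
      proof -
        have xc: "x \<in> carrier G" and yc: "y \<in> carrier G" using xy T_sub by blast+
        define K where "K = real (k+i) + 1"
        have pos: "0 < K" unfolding K_def by simp
        have "1 / K \<le> dist (f x) (f y) / Sc" using a alip[of y x] unfolding K_def by linarith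
        also have "\<dots> \<le> L * wd x y / Sc" using fl[OF xc yc] Sc by (simp add: divide_right_mono)
        finally have h1: "1 / K \<le> L * wd x y / Sc" .
        have h2: "1 / K * Sc \<le> L * wd x y" using h1 Sc by (simp add: le_divide_eq)
        have h3: "Sc \<le> L * wd x y * K" using h2 pos by (simp add: divide_le_eq)
        have e1: "L * ((real (k+n) + 1) * r) = Sc" unfolding Sc_def lam_def by (simp add: algebra_simps)
        have e2: "L * wd x y * K = L * (K * wd x y)" by simp
        have "L * ((real (k+n) + 1) * r) \<le> L * (K * wd x y)" using h3 e1 e2 by linarith
        then have h2: "(real (k+n) + 1) * r \<le> K * wd x y" using Lpos by simp
        have "K * r \<le> (real (k+n) + 1) * r" using i r unfolding K_def by simp
        then have "K * r \<le> K * wd x y" using h2 by linarith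
        then have "r \<le> wd x y" using pos by simp
        then show ?thesis using symd[OF xc yc] by simp
      qed
      have AZ: "T i \<subseteq> T (Suc i)" unfolding T_def using le_SucI by blast
      have BZ: "\<Union>(Qs (Suc i)) \<subseteq> T (Suc i)" using Qs_T by blast
      have GA: "good_cover wd (T i) r M (k+i) WA" using good_cover_mono[OF WA MA_le[unfolded MA_def]] .
      have GB: "good_cover wd (\<Union>(Qs (Suc i))) r M (k+i) \<B>" using B M_eq by simp
      have cons: "\<exists>b\<in>\<B> j. x \<in> b" if "j \<le> k+i" "a \<in> WA j" "x \<in> a" "\<alpha> x > 0" for j a x
      proof -
        have "x \<in> T i" using good_coverD(1)[OF WA that(1,2)] that(3) by blast
        then have "x \<in> \<Union>(Qs (Suc i))" using covB AZ that(4) by blast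
        then show ?thesis using cons0 that(1-3) by blast
      qed
      have "\<exists>W. good_cover wd (T (Suc i)) r M (Suc (k+i)) W"
        by (rule glue[OF AZ BZ GA GB cons covA covB rng sep])
      then show ?case unfolding M_def by simp
    qed
    have "T n = carrier G"
    proof
      show "T n \<subseteq> carrier G" by (rule T_sub)
      show "carrier G \<subseteq> T n"
      proof
        fix g assume g: "g \<in> carrier G"
        have "f g \<in> (\<Union>i\<le>n. \<Union>(U i))" using good_cover_cov[OF U, of "f g"] by blast
        then show "g \<in> T n" unfolding T_def using g by blast
      qed
    qed
    then show ?thesis using stage[of n] by simp
  qed
  have cf: "control_function (carrier G) wd (k+n) (\<lambda>r. Mc n * r + Mb n)"
    unfolding control_function_iff
  proof (intro conjI allI impI)
    fix r :: real assume "0 < r"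
    then show "0 \<le> Mc n * r + Mb n" using Mc0[of n] Mb0[of n] by simp
  next
    fix r :: real assume "0 < r"
    then show "\<exists>U. good_cover wd (carrier G) r (Mc n * r + Mb n) (k + n) U" using key by simp
  qed
  show ?thesis unfolding asdim_AN_le_def using cf Mc0[of n] Mb0[of n] by blast
qed

end


theorem mainTheorem19:
  fixes G :: "('g, 'b) monoid_scheme" and S :: "'g set"
    and act :: "'g \<Rightarrow> 'x::metric_space \<Rightarrow> 'x" and x0 :: 'x
    and k :: nat and m b c :: real
  assumes grp: "group G"
    and S_fin: "finite S" and S_sub: "S \<subseteq> carrier G"
    and S_sym: "\<forall>s\<in>S. inv\<^bsub>G\<^esub> s \<in> S"
    and S_gen: "generate G S = carrier G"
    and act_one: "\<forall>x. act \<one>\<^bsub>G\<^esub> x = x"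
    and act_mult: "\<forall>g\<in>carrier G. \<forall>h\<in>carrier G. \<forall>x. act (g \<otimes>\<^bsub>G\<^esub> h) x = act g (act h x)"
    and act_isom: "\<forall>g\<in>carrier G. \<forall>x y. dist (act g x) (act g y) = dist x y"
    and X_fin: "asdim_AN (UNIV :: 'x set) dist < \<infinity>"
    and mbc: "m > 0" "b > 0" "c > 0"
    and ctrl: "\<forall>R>0. control_function
                 {\<gamma> \<in> carrier G. dist (act \<gamma> x0) x0 \<le> R} (word_dist G S) k
                 (\<lambda>r. m * r + b * R + c)"
  shows "asdim_AN (carrier G) (word_dist G S) \<le> enat k + asdim_AN (UNIV :: 'x set) dist"
proof -
  interpret hs: hsetup G S act x0
    by (rule hsetup.intro) (use grp S_fin S_sub S_sym S_gen act_one act_mult act_isom in auto)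
  let ?A = "{enat n | n. asdim_AN_le (UNIV :: 'x set) dist n}"
  have ne: "?A \<noteq> {}"
  proof
    assume "?A = {}"
    then have "asdim_AN (UNIV :: 'x set) dist = \<infinity>" unfolding asdim_AN_def by (simp add: top_enat_def)
    then show False using X_fin by simp
  qed
  then obtain x where x: "x \<in> ?A" by blast
  have "Inf ?A = (LEAST x. x \<in> ?A)" unfolding Inf_enat_def by (rule if_not_P[OF ne])
  moreover have "(LEAST x. x \<in> ?A) \<in> ?A" by (rule LeastI[of "\<lambda>x. x \<in> ?A", OF x])
  ultimately have "Inf ?A \<in> ?A" by simp
  then obtain n where n: "asdim_AN (UNIV :: 'x set) dist = enat n" "asdim_AN_le (UNIV :: 'x set) dist n"
    unfolding asdim_AN_def by blast
  obtain cX bX where cb: "0 \<le> cX" "0 \<le> bX" "control_function (UNIV :: 'x set) dist n (\<lambda>r. cX * r + bX)"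
    using n(2) unfolding asdim_AN_le_def by blast
  have "asdim_AN_le (carrier G) (word_dist G S) (k+n)"
    by (rule hs.main_construction[OF ctrl _ _ _ cb(3) cb(1) cb(2)]) (use mbc in auto)
  then have "asdim_AN (carrier G) (word_dist G S) \<le> enat (k+n)"
    unfolding asdim_AN_def by (intro Inf_lower) blast
  then show ?thesis using n(1) by simp
qed

end
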